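(* Let $X$ be a Banach space and $f:X\to\mathbb R\cup\{+\infty\}$ a proper lower semicontinuous convex function with $S=\{x:f(x)\le0\}\ne\emptyset$. Let $K_f$ be the infimum of $K\ge 0$ such that $d(x,S)\le K\,(f(x))^+$ for all $x\in X$ ($K_f=+\infty$ if none). Then $$K_f^{-1}=\inf\Big\{\sup_{\|h\|\le1}\big(-f'(x;h)\big):\ 0<f(x)<\infty\Big\},$$ with conventions $1/0=\infty$, $1/\infty=0$, $\inf\emptyset=+\infty$.
   Context: $f'(x;h)=\lim_{t\downarrow0}t^{-1}(f(x+th)-f(x))\in[-\infty,+\infty]$ is the directional derivative of the convex function $f$ at $x\in\operatorname{dom}f$. *)

theory Defs
  imports "HOL-Analysis.Analysis"
begin

definition proper_fun :: "('a \<Rightarrow> ereal) \<Rightarrow> bool" where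
  "proper_fun f \<longleftrightarrow> (\<forall>x. f x \<noteq> -\<infinity>) \<and> (\<exists>x. f x < \<infinity>)"

definition lsc_fun :: "('a::topological_space \<Rightarrow> ereal) \<Rightarrow> bool" where
  "lsc_fun f \<longleftrightarrow> (\<forall>x. f x \<le> Liminf (at x) f)"

definition convex_fun :: "('a::real_vector \<Rightarrow> ereal) \<Rightarrow> bool" where
  "convex_fun f \<longleftrightarrow> convex {(x, r::real). f x \<le> ereal r}"

definition dir_deriv :: "('a::real_normed_vector \<Rightarrow> ereal) \<Rightarrow> 'a \<Rightarrow> 'a \<Rightarrow> ereal" where
  "dir_deriv f x h = Lim (at_right (0::real)) (\<lambda>t. (f (x + t *\<^sub>R h) - f x) / ereal t)"

text \<open>Error bound constant \<open>K_f\<close>: infimum of admissible \<open>K \<ge> 0\<close>; \<open>Inf {} = \<infinity>\<close>.\<close>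
definition error_bound_const :: "('a::real_normed_vector \<Rightarrow> ereal) \<Rightarrow> ereal" where
  "error_bound_const f = Inf (ereal ` {K::real. K \<ge> 0 \<and>
      (\<forall>x. ereal (infdist x {y. f y \<le> 0}) \<le> ereal K * max 0 (f x))})"

end

theory Submission
  imports Defs
begin

lemma proper_not_minf: "proper_fun f \<Longrightarrow> f x \<noteq> -\<infinity>"
  unfolding proper_fun_def by auto

lemma convex_fun_ineq:
  fixes f :: "'a::real_vector \<Rightarrow> ereal"
  assumes "convex_fun f" "f x = ereal a" "f y = ereal b" "0 \<le> u" "u \<le> 1"
  shows "f ((1-u) *\<^sub>R x + u *\<^sub>R y) \<le> ereal ((1-u)*a + u*b)"
proof -
  let ?E = "{(x, r::real). f x \<le> ereal r}"
  have "convex ?E" using assms(1) unfolding convex_fun_def .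
  moreover have "(x,a) \<in> ?E" "(y,b) \<in> ?E" using assms by auto
  ultimately have "(1-u) *\<^sub>R (x,a) + u *\<^sub>R (y,b) \<in> ?E"
    using assms(4,5) by (intro convexD) auto
  then show ?thesis by simp
qed

lemma quot_mono:
  fixes f :: "'a::real_normed_vector \<Rightarrow> ereal"
  assumes cf: "convex_fun f" and pf: "proper_fun f" and fx: "f x = ereal a"
    and st: "0 < s" "s \<le> t"
  shows "(f (x + s *\<^sub>R h) - f x) / ereal s \<le> (f (x + t *\<^sub>R h) - f x) / ereal t"
proof (cases "f (x + t *\<^sub>R h) = \<infinity>")
  case True
  then show ?thesis using st fx by (simp add: divide_ereal_def)
next
  case False
  then obtain b where b: "f (x + t *\<^sub>R h) = ereal b"
    using proper_not_minf[OF pf] by (cases "f (x + t *\<^sub>R h)") auto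
  define u where "u = s / t"
  have u: "0 \<le> u" "u \<le> 1" using st by (auto simp: u_def)
  have eq: "x + s *\<^sub>R h = (1-u) *\<^sub>R x + u *\<^sub>R (x + t *\<^sub>R h)"
    using st by (simp add: u_def algebra_simps)
  have le: "f (x + s *\<^sub>R h) \<le> ereal ((1-u)*a + u*b)"
    unfolding eq by (rule convex_fun_ineq[OF cf fx b u])
  then obtain c where c: "f (x + s *\<^sub>R h) = ereal c" "c \<le> (1-u)*a + u*b"
    using proper_not_minf[OF pf, of "x + s *\<^sub>R h"] by (cases "f (x + s *\<^sub>R h)") auto
  have "(c - a) / s \<le> (b - a) / t"
  proof -
    have "c - a \<le> u * (b - a)" using c(2) by (simp add: algebra_simps)
    then have "(c - a) / s \<le> u * (b - a) / s" using st by (simp add: divide_right_mono)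
    also have "\<dots> = (b - a) / t" using st by (simp add: u_def field_simps)
    finally show ?thesis .
  qed
  then show ?thesis using c b fx st by (simp add: divide_ereal_def inverse_eq_divide)
qed

lemma dir_deriv_INF:
  fixes f :: "'a::real_normed_vector \<Rightarrow> ereal"
  assumes cf: "convex_fun f" and pf: "proper_fun f" and fx: "f x \<noteq> \<infinity>"
  shows "dir_deriv f x h = (INF t\<in>{0<..}. (f (x + t *\<^sub>R h) - f x) / ereal t)"
proof -
  obtain a where a: "f x = ereal a" using fx proper_not_minf[OF pf, of x] by (cases "f x") auto
  define q where "q t = (f (x + t *\<^sub>R h) - f x) / ereal t" for t
  define I where "I = (INF t\<in>{0<..}. q t)"
  have "(q \<longlongrightarrow> I) (at_right 0)"
  proof (rule order_tendstoI)
    fix y assume "y < I"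
    then have "\<forall>t>0. y < q t" unfolding I_def by (auto simp: less_INF_D)
    then show "\<forall>\<^sub>F t in at_right 0. y < q t"
      by (auto simp: eventually_at_right[of 0 1] intro!: exI[of _ 1])
  next
    fix y assume "I < y"
    then obtain t where t: "t > 0" "q t < y" unfolding I_def by (auto simp: INF_less_iff)
    have "\<forall>s>0. s < t \<longrightarrow> q s < y"
    proof (intro allI impI)
      fix s :: real assume "0 < s" "s < t"
      then have "q s \<le> q t" unfolding q_def by (intro quot_mono[OF cf pf a]) auto
      then show "q s < y" using t by simp
    qed
    then show "\<forall>\<^sub>F s in at_right 0. q s < y"
      using t by (auto simp: eventually_at_right[of 0 1] intro!: exI[of _ t])
  qed
  then show ?thesis unfolding dir_deriv_def q_def[symmetric] I_def[symmetric]
    by (intro tendsto_Lim) auto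
qed

definition gr :: "('a \<Rightarrow> ereal) \<Rightarrow> 'a \<Rightarrow> real" where
  "gr f y = max 0 (real_of_ereal (f y))"

lemma gr_nonneg: "0 \<le> gr f y" by (simp add: gr_def)

lemma f_le_gr: "proper_fun f \<Longrightarrow> f y \<noteq> \<infinity> \<Longrightarrow> f y \<le> ereal (gr f y)"
  using proper_not_minf[of f y] by (cases "f y") (auto simp: gr_def)

lemma lsc_seq:
  fixes f :: "'a::metric_space \<Rightarrow> ereal"
  assumes pf: "proper_fun f" and lf: "lsc_fun f"
    and X: "X \<longlonglongrightarrow> z" and b: "b \<longlonglongrightarrow> B"
    and le: "\<And>k. f (X k) \<noteq> \<infinity> \<and> gr f (X k) \<le> b k"
  shows "f z \<noteq> \<infinity> \<and> gr f z \<le> B"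
proof -
  have fz: "f z \<le> ereal B"
  proof (rule ccontr)
    assume "\<not> f z \<le> ereal B"
    then have "ereal B < f z" by simp
    then obtain r where r: "ereal B < r" "r < f z" using dense by blast
    then obtain r' where r': "r = ereal r'" by (cases r) auto
    have "f z \<le> Liminf (at z) f" using lf unfolding lsc_fun_def by blast
    then have "\<forall>\<^sub>F y in at z. r < f y" using r(2) unfolding le_Liminf_iff by blast
    then have "\<forall>\<^sub>F y in nhds z. y \<noteq> z \<longrightarrow> r < f y" by (simp add: eventually_at_filter)
    then have "\<forall>\<^sub>F y in nhds z. r < f y" using r(2) by (auto elim: eventually_mono)
    from eventually_compose_filterlim[OF this X]
    have e1: "\<forall>\<^sub>F k in sequentially. r < f (X k)" .
    have e2: "\<forall>\<^sub>F k in sequentially. b k < r'" using b r r' by (intro order_tendstoD) auto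
    obtain k where k: "r < f (X k)" "b k < r'" using eventually_happens'[OF _ eventually_conj[OF e1 e2]] by auto
    have "f (X k) \<le> ereal (gr f (X k))" using le[of k] by (intro f_le_gr[OF pf]) simp
    also have "\<dots> \<le> ereal (b k)" using le by simp
    finally have "f (X k) \<le> ereal (b k)" .
    moreover have "ereal (b k) < ereal r'" using k by simp
    ultimately have "f (X k) < ereal r'" by (rule le_less_trans)
    then show False using k r' by simp
  qed
  have "0 \<le> b k" for k using le[of k] gr_nonneg[of f "X k"] by linarith
  then have "0 \<le> B" using b by (intro LIMSEQ_le_const) auto
  moreover have "f z \<noteq> \<infinity>" using fz by auto
  ultimately show ?thesis using fz proper_not_minf[OF pf, of z] by (cases "f z") (auto simp: gr_def)
qed

lemma ekeland:
  fixes f :: "'a::complete_space \<Rightarrow> ereal"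
  assumes pf: "proper_fun f" and lf: "lsc_fun f" and c: "0 < c" and fx0: "f x0 \<noteq> \<infinity>"
  shows "\<exists>z. f z \<noteq> \<infinity> \<and> gr f z + c * dist z x0 \<le> gr f x0 \<and>
     (\<forall>y. f y \<noteq> \<infinity> \<and> gr f y + c * dist y z \<le> gr f z \<longrightarrow> y = z)"
proof -
  define T where "T x = {y. f y \<noteq> \<infinity> \<and> gr f y + c * dist y x \<le> gr f x}" for x
  have Tself: "f x \<noteq> \<infinity> \<Longrightarrow> x \<in> T x" for x by (simp add: T_def)
  have Ttrans: "y \<in> T x \<Longrightarrow> z \<in> T y \<Longrightarrow> z \<in> T x" for x y z
  proof -
    assume "y \<in> T x" "z \<in> T y"
    moreover have "dist z x \<le> dist z y + dist y x" by (rule dist_triangle)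
    ultimately show "z \<in> T x" using c unfolding T_def
      by (auto, smt (verit, best) mult_left_mono distrib_left)
  qed
  have bdd: "bdd_below (gr f ` T x)" for x by (rule bdd_belowI[of _ 0]) (auto simp: gr_nonneg)
  have "\<exists>y. f x \<noteq> \<infinity> \<longrightarrow> y \<in> T x \<and> gr f y \<le> Inf (gr f ` T x) + (1/2)^n" for x n
  proof (cases "f x = \<infinity>")
    case False
    then have "Inf (gr f ` T x) < Inf (gr f ` T x) + (1/2)^n" by simp
    with cInf_lessD[of "gr f ` T x"] Tself[OF False]
    obtain y where "y \<in> T x" "gr f y < Inf (gr f ` T x) + (1/2)^n" by blast
    then show ?thesis by (intro exI[of _ y]) auto
  qed auto
  then obtain nxt where nxt: "\<And>x n. f x \<noteq> \<infinity> \<Longrightarrow> nxt x n \<in> T x \<and> gr f (nxt x n) \<le> Inf (gr f ` T x) + (1/2)^n"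
    by metis
  define xs where "xs = rec_nat x0 (\<lambda>n x. nxt x n)"
  have xs0: "xs 0 = x0" and xsS: "xs (Suc n) = nxt (xs n) n" for n by (simp_all add: xs_def)
  have fin: "f (xs n) \<noteq> \<infinity>" for n
  proof (induction n)
    case 0 then show ?case using fx0 xs0 by simp
  next
    case (Suc n) then show ?case using nxt[of "xs n" n] xsS by (auto simp: T_def)
  qed
  have step: "xs (Suc n) \<in> T (xs n)" for n using nxt[OF fin[of n]] xsS by simp
  have chain: "k \<ge> n \<Longrightarrow> xs k \<in> T (xs n)" for k n
  proof (induction k rule: dec_induct)
    case base then show ?case using Tself fin by blast
  next
    case (step k) then show ?case using Ttrans \<open>\<And>n. xs (Suc n) \<in> T (xs n)\<close> by blast
  qed
  have small: "y \<in> T (xs (Suc n)) \<Longrightarrow> c * dist y (xs (Suc n)) \<le> (1/2)^n" for y n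
  proof -
    assume y: "y \<in> T (xs (Suc n))"
    then have "y \<in> T (xs n)" using Ttrans step by blast
    then have "Inf (gr f ` T (xs n)) \<le> gr f y" using bdd by (intro cInf_lower) auto
    moreover have "gr f (xs (Suc n)) \<le> Inf (gr f ` T (xs n)) + (1/2)^n"
      using nxt[OF fin[of n]] xsS by simp
    moreover have "gr f y + c * dist y (xs (Suc n)) \<le> gr f (xs (Suc n))" using y by (simp add: T_def)
    ultimately show ?thesis by linarith
  qed
  have small': "y \<in> T (xs (Suc n)) \<Longrightarrow> dist y (xs (Suc n)) \<le> (1/2)^n / c" for y n
    using small[of y n] c by (simp add: field_simps mult.commute)
  have "Cauchy xs"
  proof (rule metric_CauchyI)
    fix e :: real assume "0 < e"
    then have "0 < e * c / 2" using c by simp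
    then obtain N where N: "(1/2::real)^N < e * c / 2" using real_arch_pow_inv[of "e*c/2" "1/2"] by auto
    show "\<exists>M. \<forall>m\<ge>M. \<forall>n\<ge>M. dist (xs m) (xs n) < e"
    proof (intro exI[of _ "Suc N"] allI impI)
      fix m n assume "Suc N \<le> m" "Suc N \<le> n"
      then have "dist (xs m) (xs (Suc N)) \<le> (1/2)^N / c" "dist (xs n) (xs (Suc N)) \<le> (1/2)^N / c"
        using small' chain by blast+
      moreover have "(1/2)^N / c < e / 2" using N c by (simp add: field_simps)
      moreover have "dist (xs m) (xs n) \<le> dist (xs m) (xs (Suc N)) + dist (xs n) (xs (Suc N))"
        by (rule dist_triangle2)
      ultimately show "dist (xs m) (xs n) < e" by linarith
    qed
  qed
  then obtain z where z: "xs \<longlonglongrightarrow> z" using Cauchy_convergent convergent_def by blast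
  have zin: "z \<in> T (xs n)" for n
  proof -
    have lim1: "(\<lambda>k. xs (k + n)) \<longlonglongrightarrow> z" using z by (rule LIMSEQ_ignore_initial_segment)
    have "(\<lambda>k. gr f (xs n) - c * dist (xs (k + n)) (xs n)) \<longlonglongrightarrow> gr f (xs n) - c * dist z (xs n)"
      by (intro tendsto_intros lim1)
    moreover have "f (xs (k + n)) \<noteq> \<infinity> \<and> gr f (xs (k + n)) \<le> gr f (xs n) - c * dist (xs (k + n)) (xs n)" for k
      using chain[of n "k + n"] by (auto simp: T_def)
    ultimately have "f z \<noteq> \<infinity> \<and> gr f z \<le> gr f (xs n) - c * dist z (xs n)"
      using lsc_seq[OF pf lf lim1] by blast
    then show ?thesis by (simp add: T_def)
  qed
  show ?thesis
  proof (intro exI[of _ z] conjI allI impI)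
    show "f z \<noteq> \<infinity>" "gr f z + c * dist z x0 \<le> gr f x0" using zin[of 0] xs0 by (auto simp: T_def)
  next
    fix y assume y: "f y \<noteq> \<infinity> \<and> gr f y + c * dist y z \<le> gr f z"
    then have yT: "y \<in> T z" by (simp add: T_def)
    have "dist y z \<le> 2 * ((1/2)^n / c)" for n
    proof -
      have "dist y (xs (Suc n)) \<le> (1/2)^n / c" using small' Ttrans[OF zin yT] by blast
      moreover have "dist z (xs (Suc n)) \<le> (1/2)^n / c" using small' zin by blast
      moreover have "dist y z \<le> dist y (xs (Suc n)) + dist z (xs (Suc n))" by (rule dist_triangle2)
      ultimately show ?thesis by linarith
    qed
    show "y = z"
    proof (rule ccontr)
      assume "y \<noteq> z"
      then have "0 < dist y z * c / 2" using c by simp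
      then obtain N where N: "(1/2::real)^N < dist y z * c / 2" using real_arch_pow_inv[of "dist y z * c / 2" "1/2"] by auto
      have "dist y z \<le> 2 * ((1/2)^N / c)" by fact
      then show False using N c by (simp add: field_simps)
    qed
  qed
qed

lemma slope_nonneg:
  fixes f :: "'a::real_normed_vector \<Rightarrow> ereal"
  assumes cf: "convex_fun f" and pf: "proper_fun f" and fx: "f x \<noteq> \<infinity>"
  shows "0 \<le> (SUP h\<in>cball 0 1. - dir_deriv f x h)"
proof -
  obtain a where a: "f x = ereal a" using fx proper_not_minf[OF pf, of x] by (cases "f x") auto
  have "dir_deriv f x 0 = (INF t\<in>{0<..}. (f (x + t *\<^sub>R 0) - f x) / ereal (t::real))"
    by (rule dir_deriv_INF[OF cf pf fx])
  also have "\<dots> = (INF t\<in>{0::real<..}. 0)" using a by (intro INF_cong) auto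
  also have "\<dots> = 0" by simp
  finally have "- dir_deriv f x 0 = 0" by simp
  moreover have "- dir_deriv f x 0 \<le> (SUP h\<in>cball 0 1. - dir_deriv f x h)"
    by (rule SUP_upper) simp
  ultimately show ?thesis by simp
qed

lemma slope_ge:
  fixes f :: "'a::real_normed_vector \<Rightarrow> ereal"
  assumes cf: "convex_fun f" and pf: "proper_fun f" and fx: "f x = ereal a" and a: "0 < a"
    and S: "{y. f y \<le> 0} \<noteq> {}" and K: "0 \<le> K"
    and bound: "infdist x {y. f y \<le> 0} \<le> K * a"
  shows "inverse (ereal K) \<le> (SUP h\<in>cball 0 1. - dir_deriv f x h)"
proof (rule dense_le)
  fix y assume y: "y < inverse (ereal K)"
  show "y \<le> (SUP h\<in>cball 0 1. - dir_deriv f x h)"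
  proof (cases "y \<le> 0")
    case True
    have "0 \<le> (SUP h\<in>cball 0 1. - dir_deriv f x h)" using fx by (intro slope_nonneg[OF cf pf]) simp
    then show ?thesis using True by (rule order_trans[rotated])
  next
    case False
    then obtain r where r: "y = ereal r" "0 < r" using y by (cases y) auto
    have rK: "r * K < 1"
    proof (cases "K = 0")
      case False
      then have "r < 1 / K" using y r K by (simp add: inverse_eq_divide)
      then show ?thesis using K False by (simp add: field_simps)
    qed simp
    have "K * a < a / r" using rK a r(2) by (simp add: field_simps)
    then have "infdist x {y. f y \<le> 0} < a / r" using bound by linarith
    then obtain z where z: "f z \<le> 0" "dist x z < a / r"
      using cInf_lessD[of "dist x ` {y. f y \<le> 0}"] S by (auto simp: infdist_notempty)
    obtain b where b: "f z = ereal b" "b \<le> 0"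
      using z(1) proper_not_minf[OF pf, of z] by (cases "f z") auto
    have "z \<noteq> x" using z fx a by auto
    define t where "t = dist x z"
    have t: "0 < t" using \<open>z \<noteq> x\<close> by (simp add: t_def)
    define h where "h = (1 / t) *\<^sub>R (z - x)"
    have h: "h \<in> cball 0 1" using t by (simp add: h_def t_def dist_norm norm_minus_commute)
    have xth: "x + t *\<^sub>R h = z" using t by (simp add: h_def)
    have "dir_deriv f x h = (INF t\<in>{0<..}. (f (x + t *\<^sub>R h) - f x) / ereal t)"
      by (rule dir_deriv_INF[OF cf pf]) (simp add: fx)
    also have "\<dots> \<le> (f (x + t *\<^sub>R h) - f x) / ereal t"
      using t by (intro INF_lower) auto
    also have "\<dots> = ereal ((b - a) / t)" using xth b fx t by (simp add: divide_ereal_def inverse_eq_divide)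
    finally have "- ereal ((b - a) / t) \<le> - dir_deriv f x h" by (simp only: ereal_minus_le_minus)
    moreover have "- ereal ((b - a) / t) = ereal ((a - b) / t)" by (simp only: uminus_ereal.simps minus_divide_left minus_diff_eq)
    ultimately have d: "ereal ((a - b) / t) \<le> - dir_deriv f x h" by simp
    have "r * t < a" using z(2) r(2) by (simp add: t_def field_simps)
    then have "r \<le> (a - b) / t" using t b by (simp add: field_simps)
    then have "y \<le> ereal ((a - b) / t)" using r by simp
    also have "\<dots> \<le> - dir_deriv f x h" by (rule d)
    also have "\<dots> \<le> (SUP h\<in>cball 0 1. - dir_deriv f x h)" using h by (rule SUP_upper)
    finally show ?thesis .
  qed
qed

lemma slope_step:
  fixes f :: "'a::real_normed_vector \<Rightarrow> ereal"
  assumes cf: "convex_fun f" and pf: "proper_fun f" and lf: "lsc_fun f"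
    and fz: "f z = ereal a" and a: "0 < a" and c: "0 < c"
    and sl: "ereal c < (SUP h\<in>cball 0 1. - dir_deriv f z h)"
  shows "\<exists>y b. f y = ereal b \<and> 0 < b \<and> c * dist y z < a - b"
proof -
  obtain h where h: "h \<in> cball 0 1" "ereal c < - dir_deriv f z h" using sl by (auto simp: less_SUP_iff)
  define q where "q t = (f (z + t *\<^sub>R h) - f z) / ereal t" for t
  have dd: "dir_deriv f z h = (INF t\<in>{0<..}. q t)" unfolding q_def by (rule dir_deriv_INF[OF cf pf]) (use fz in simp)
  have "- (- dir_deriv f z h) < - ereal c" using h(2) by (simp only: ereal_minus_less_minus)
  then have "dir_deriv f z h < ereal (-c)" by simp
  then obtain t0 where t0: "0 < t0" "q t0 < ereal (-c)" unfolding dd by (auto simp: INF_less_iff)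
  have ev1: "\<forall>\<^sub>F t in at_right 0. q t < ereal (-c)"
  proof -
    have "\<forall>t>0. t < t0 \<longrightarrow> q t < ereal (-c)"
    proof (intro allI impI)
      fix t :: real assume "0 < t" "t < t0"
      then have "q t \<le> q t0" unfolding q_def by (intro quot_mono[OF cf pf fz]) auto
      then show "q t < ereal (-c)" using t0 by simp
    qed
    then show ?thesis using t0 by (auto simp: eventually_at_right[of 0 1] intro!: exI[of _ t0])
  qed
  have "h \<noteq> 0"
  proof
    assume "h = 0"
    then have "q t0 = 0" using fz t0 by (simp add: q_def)
    then show False using t0 c by simp
  qed
  have "f z \<le> Liminf (at z) f" using lf unfolding lsc_fun_def by blast
  moreover have "0 < f z" using a fz by simp
  ultimately have "\<forall>\<^sub>F y in at z. 0 < f y" unfolding le_Liminf_iff by blast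
  moreover have "filterlim (\<lambda>t. z + t *\<^sub>R h) (at z) (at_right (0::real))"
  proof (rule filterlim_atI)
    have "((\<lambda>t. z + t *\<^sub>R h) \<longlongrightarrow> z + 0 *\<^sub>R h) (at_right (0::real))"
      by (intro tendsto_intros)
    then show "((\<lambda>t. z + t *\<^sub>R h) \<longlongrightarrow> z) (at_right (0::real))" by simp
    show "\<forall>\<^sub>F t in at_right 0. z + t *\<^sub>R h \<noteq> z" using \<open>h \<noteq> 0\<close>
      by (auto simp: eventually_at_right[of 0 1] intro!: exI[of _ 1])
  qed
  ultimately have ev2: "\<forall>\<^sub>F t in at_right 0. 0 < f (z + t *\<^sub>R h)" by (rule eventually_compose_filterlim)
  have ev3: "\<forall>\<^sub>F t in at_right (0::real). 0 < t" by (simp add: eventually_at_right_less)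
  obtain t where t: "q t < ereal (-c)" "0 < f (z + t *\<^sub>R h)" "0 < t"
    using eventually_happens'[OF _ eventually_conj[OF ev1 eventually_conj[OF ev2 ev3]]] by auto
  show ?thesis
  proof (cases "f (z + t *\<^sub>R h)")
    case (real b)
    have "(b - a) / t < - c" using t(1) real fz t(3) by (simp add: q_def divide_ereal_def inverse_eq_divide)
    then have "c * t < a - b" using t(3) by (simp add: field_simps)
    moreover have "dist (z + t *\<^sub>R h) z \<le> t" using h(1) t(3) by (simp add: dist_norm mult_left_le)
    moreover have "c * dist (z + t *\<^sub>R h) z \<le> c * t" using c by (intro mult_left_mono) (auto simp: \<open>dist (z + t *\<^sub>R h) z \<le> t\<close>)
    ultimately have "c * dist (z + t *\<^sub>R h) z < a - b" by linarith
    then show ?thesis using real t(2) by (intro exI[of _ "z + t *\<^sub>R h"] exI[of _ b]) auto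
  next
    case PInf
    then show ?thesis using t(1) t(3) fz by (simp add: q_def)
  next
    case MInf then show ?thesis using t(2) by simp
  qed
qed

lemma admissible:
  fixes f :: "'a::banach \<Rightarrow> ereal"
  assumes cf: "convex_fun f" and pf: "proper_fun f" and lf: "lsc_fun f" and c: "0 < c"
    and sl: "\<And>x. 0 < f x \<Longrightarrow> f x < \<infinity> \<Longrightarrow> ereal c < (SUP h\<in>cball 0 1. - dir_deriv f x h)"
  shows "ereal (infdist x {y. f y \<le> 0}) \<le> ereal (1/c) * max 0 (f x)"
proof (cases "f x \<le> 0")
  case True
  then show ?thesis using c by (simp add: infdist_zero)
next
  case False
  show ?thesis
  proof (cases "f x")
    case PInf then show ?thesis using c by simp
  next
    case MInf then show ?thesis using proper_not_minf[OF pf] by blast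
  next
    case (real a)
    then have a: "0 < a" using False by simp
    obtain z where z: "f z \<noteq> \<infinity>" "gr f z + c * dist z x \<le> gr f x"
      and zmin: "\<And>y. f y \<noteq> \<infinity> \<and> gr f y + c * dist y z \<le> gr f z \<Longrightarrow> y = z"
      using ekeland[OF pf lf c, of x] real by auto
    have fz: "f z \<le> 0"
    proof (rule ccontr)
      assume nz: "\<not> f z \<le> 0"
      then obtain d where d: "f z = ereal d" "0 < d" using z(1) by (cases "f z") auto
      from slope_step[OF cf pf lf d c] sl[of z] d
      obtain y b where y: "f y = ereal b" "0 < b" "c * dist y z < d - b" by auto
      have "gr f y + c * dist y z \<le> gr f z" using y d by (simp add: gr_def)
      then have "y = z" using zmin y by auto
      then show False using y d by simp
    qed
    have "gr f x = a" using real a by (simp add: gr_def)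
    then have "c * dist z x \<le> a" using z(2) gr_nonneg[of f z] by linarith
    then have "dist x z \<le> a / c" using c by (simp add: field_simps dist_commute)
    then have "infdist x {y. f y \<le> 0} \<le> a / c" using fz by (intro infdist_le2) auto
    then show ?thesis using real a c by simp
  qed
qed

theorem mainTheorem9:
  fixes f :: "'a::banach \<Rightarrow> ereal"
  assumes "proper_fun f" and "lsc_fun f" and "convex_fun f"
    and "{x. f x \<le> 0} \<noteq> {}"
  shows "inverse (error_bound_const f) =
    Inf {(SUP h\<in>cball 0 1. - dir_deriv f x h) | x. 0 < f x \<and> f x < \<infinity>}"
proof -
  note pf = assms(1) and lf = assms(2) and cf = assms(3) and S = assms(4)
  define A where "A = {K::real. K \<ge> 0 \<and>
      (\<forall>x. ereal (infdist x {y. f y \<le> 0}) \<le> ereal K * max 0 (f x))}"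
  define E where "E = Inf (ereal ` A)"
  have E: "error_bound_const f = E" unfolding E_def A_def error_bound_const_def ..
  define sl where "sl x = (SUP h\<in>cball 0 1. - dir_deriv f x h)" for x
  define M where "M = Inf {sl x | x. 0 < f x \<and> f x < \<infinity>}"
  have E0: "0 \<le> E" unfolding E_def A_def by (rule Inf_greatest) auto
  have "inverse E \<le> M"
    unfolding M_def
  proof (rule Inf_greatest, clarify)
    fix x assume x: "0 < f x" "f x < \<infinity>"
    then obtain a where a: "f x = ereal a" "0 < a" by (cases "f x") auto
    have s0: "0 \<le> sl x" unfolding sl_def using slope_nonneg[OF cf pf] x by simp
    have "inverse (sl x) \<le> E" unfolding E_def
    proof (rule Inf_greatest, clarify)
      fix K assume K: "K \<in> A"
      then have K0: "0 \<le> K" and bd: "ereal (infdist x {y. f y \<le> 0}) \<le> ereal K * max 0 (f x)"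
        unfolding A_def by auto
      have "infdist x {y. f y \<le> 0} \<le> K * a" using bd a by simp
      then have "inverse (ereal K) \<le> sl x" unfolding sl_def by (rule slope_ge[OF cf pf a(1) a(2) S K0])
      then have "inverse (sl x) \<le> inverse (inverse (ereal K))"
        by (intro ereal_inverse_antimono) (auto simp: K0 inverse_ereal_ge0I)
      then show "inverse (sl x) \<le> ereal K" by (subst (asm) ereal_inv_inv) simp
    qed
    then have "inverse E \<le> inverse (inverse (sl x))"
      by (intro ereal_inverse_antimono) (auto simp: s0 inverse_ereal_ge0I)
    also have "\<dots> = sl x" using s0 by auto
    finally show "inverse E \<le> sl x" .
  qed
  moreover have "M \<le> inverse E"
  proof (rule dense_le)
    fix y assume y: "y < M"
    show "y \<le> inverse E"
    proof (cases "y \<le> 0")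
      case True then show ?thesis using E0 inverse_ereal_ge0I order_trans by blast
    next
      case False
      then obtain c where c: "y = ereal c" "0 < c" using y by (cases y) auto
      have slc: "ereal c < sl x" if "0 < f x" "f x < \<infinity>" for x
      proof -
        have "M \<le> sl x" unfolding M_def using that by (intro Inf_lower) auto
        then show ?thesis using y c by simp
      qed
      have "1/c \<in> A" unfolding A_def
        using admissible[OF cf pf lf c(2)] slc c(2) unfolding sl_def by auto
      then have "E \<le> ereal (1/c)" unfolding E_def by (intro Inf_lower) auto
      then have "inverse (ereal (1/c)) \<le> inverse E" using E0 by (rule ereal_inverse_antimono[rotated])
      then show ?thesis using c by simp
    qed
  qed
  ultimately show ?thesis unfolding E M_def sl_def by simp
qed

end
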